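(* Every finite non-empty word $W$ over a $2$-letter alphabet satisfies $r(W)=1$, i.e., $W$ has exactly one square-free reduct.
   Context: A square is a finite non-empty word of the form $XX$. A word is square-free if it has no factor that is a square. If a word has the form $W=UXXV$ with $X$ non-empty, replacing it by $UXV$ is called a square reduction. A reduct of $W$ is any square-free word obtainable from $W$ by a finite sequence (possibly empty) of square reductions. $r(W)$ denotes the number of distinct reducts of $W$. *)

theory Defs
  imports Main
begin

definition square_free :: "'a list \<Rightarrow> bool" where
  "square_free w \<longleftrightarrow> \<not> (\<exists>u x v. x \<noteq> [] \<and> w = u @ x @ x @ v)"

definition square_reduction :: "'a list \<Rightarrow> 'a list \<Rightarrow> bool" where
  "square_reduction w w' \<longleftrightarrow> (\<exists>u x v. x \<noteq> [] \<and> w = u @ x @ x @ v \<and> w' = u @ x @ v)"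

definition reducts :: "'a list \<Rightarrow> 'a list set" where
  "reducts W = {w. square_reduction\<^sup>*\<^sup>* W w \<and> square_free w}"

definition r :: "'a list \<Rightarrow> nat" where
  "r W = card (reducts W)"

end

theory Submission
  imports Defs
begin

lemma sf_adj: "square_free (u @ c # c # v) \<Longrightarrow> False"
  unfolding square_free_def
  by (metis append.simps append_Cons list.distinct(1) append_Nil)

lemma sf_shape:
  assumes "square_free w" "set w \<subseteq> {a,b}" "a \<noteq> b" "w \<noteq> []"
  shows "w \<in> {[a],[b],[a,b],[b,a],[a,b,a],[b,a,b]}"
proof -
  have nx: "\<not> (\<exists>u c v. w = u @ c # c # v)" using assms(1) sf_adj by metis
  have l4: "length w \<le> 3"
  proof (rule ccontr)
    assume "\<not> length w \<le> 3"
    then obtain x1 x2 x3 x4 rest where w: "w = x1 # x2 # x3 # x4 # rest"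
      by (metis Suc_le_length_iff numeral_3_eq_3 not_less_eq_eq)
    have "x1 \<noteq> x2" using nx w by (metis append_Nil)
    moreover have "x2 \<noteq> x3" using nx w by (metis append_Cons append_Nil)
    moreover have "x3 \<noteq> x4" using nx w by (metis append_Cons append_Nil)
    ultimately have "x1 = x3" "x2 = x4" using assms(2) w by auto
    then have "w = [] @ [x1,x2] @ [x1,x2] @ rest" using w by simp
    then show False using assms(1) unfolding square_free_def by blast
  qed
  show ?thesis
  proof (cases w)
    case Nil then show ?thesis using assms by simp
  next
    case (Cons x1 t1)
    show ?thesis
    proof (cases t1)
      case Nil then show ?thesis using assms Cons by auto
    next
      case (Cons x2 t2)
      have d12: "x1 \<noteq> x2" using nx \<open>w = x1 # t1\<close> Cons by (metis append_Nil)
      show ?thesis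
      proof (cases t2)
        case Nil then show ?thesis using assms \<open>w = x1 # t1\<close> Cons d12 by auto
      next
        case (Cons x3 t3)
        have d23: "x2 \<noteq> x3" using nx \<open>w = x1 # t1\<close> \<open>t1 = x2 # t2\<close> Cons
          by (metis append_Cons append_Nil)
        have "t3 = []" using l4 \<open>w = x1 # t1\<close> \<open>t1 = x2 # t2\<close> Cons by simp
        then show ?thesis using assms \<open>w = x1 # t1\<close> \<open>t1 = x2 # t2\<close> Cons d12 d23 by auto
      qed
    qed
  qed
qed

lemma step_inv:
  assumes "square_reduction w w'"
  shows "w' \<noteq> [] \<and> hd w' = hd w \<and> last w' = last w \<and> set w' = set w \<and> length w' < length w"
proof -
  obtain u x v where h: "x \<noteq> []" "w = u @ x @ x @ v" "w' = u @ x @ v"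
    using assms unfolding square_reduction_def by blast
  show ?thesis using h by (auto simp: hd_append last_append)
qed

lemma steps_inv:
  assumes "square_reduction\<^sup>*\<^sup>* w w'" "w \<noteq> []"
  shows "w' \<noteq> [] \<and> hd w' = hd w \<and> last w' = last w \<and> set w' = set w"
  using assms by (induction rule: rtranclp_induct) (auto dest: step_inv)

lemma exists_red: "\<exists>w'. square_reduction\<^sup>*\<^sup>* w w' \<and> square_free w'"
proof (induction "length w" arbitrary: w rule: less_induct)
  case less
  show ?case
  proof (cases "square_free w")
    case True then show ?thesis by blast
  next
    case False
    then obtain u x v where h: "x \<noteq> []" "w = u @ x @ x @ v"
      unfolding square_free_def by blast
    have st: "square_reduction w (u @ x @ v)" unfolding square_reduction_def using h by blast
    then have "length (u @ x @ v) < length w" using step_inv by blast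
    then obtain w' where "square_reduction\<^sup>*\<^sup>* (u @ x @ v) w' \<and> square_free w'"
      using less by blast
    then show ?thesis using st by (meson converse_rtranclp_into_rtranclp)
  qed
qed

theorem proposition2p1:
  fixes A :: "'a set" and W :: "'a list"
  assumes "card A = 2" and "set W \<subseteq> A" and "W \<noteq> []"
  shows "r W = 1"
proof -
  obtain a b where ab: "A = {a,b}" "a \<noteq> b" using assms(1) card_2_iff by metis
  obtain w0 where w0: "w0 \<in> reducts W" using exists_red unfolding reducts_def by blast
  have "reducts W = {w0}"
  proof
    show "{w0} \<subseteq> reducts W" using w0 by simp
    show "reducts W \<subseteq> {w0}"
    proof
      fix w assume w: "w \<in> reducts W"
      have i1: "w \<noteq> [] \<and> hd w = hd W \<and> last w = last W \<and> set w = set W"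
        using w assms(3) steps_inv unfolding reducts_def by blast
      have i2: "w0 \<noteq> [] \<and> hd w0 = hd W \<and> last w0 = last W \<and> set w0 = set W"
        using w0 assms(3) steps_inv unfolding reducts_def by blast
      have s1: "w \<in> {[a],[b],[a,b],[b,a],[a,b,a],[b,a,b]}"
        using sf_shape[of w a b] w i1 assms(2) ab unfolding reducts_def by auto
      have s2: "w0 \<in> {[a],[b],[a,b],[b,a],[a,b,a],[b,a,b]}"
        using sf_shape[of w0 a b] w0 i2 assms(2) ab unfolding reducts_def by auto
      have "hd w = hd w0" "last w = last w0" "set w = set w0" using i1 i2 by auto
      then show "w \<in> {w0}" using s1 s2 ab(2) by (auto simp: insert_commute)
    qed
  qed
  then show ?thesis unfolding r_def by simp
qed

end
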